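(* Let $1\le k\le n$ and let $Y$ be a Young diagram of shape $\lambda=(\lambda_1,\ldots,\lambda_k)$ contained in the $k\times(n-k)$ rectangle, justified to the northwest. There is a bijection from the set of Catalan paths of size $(n,k)$ constrained by $Y$ to the set of Catalan tableaux of size $(n,k)$ whose Young diagram is $Y$ (equivalently, of type $\tau$ with $\lambda(\tau)=\lambda$), and this bijection preserves weight: if the Catalan path $C$ maps to the tableau $T$, then $\mathrm{wt}(C)=\mathrm{wt}(T)$.
   Context: Coordinates: label the vertical grid lines of the $k\times(n-k)$ rectangle $0,1,\ldots,n-k$ from left to right; rows are numbered $1,\ldots,k$ from top to bottom; row $i$ of $Y$ consists of the leftmost $\lambda_i$ boxes, $n-k\ge\lambda_1\ge\cdots\ge\lambda_k\ge0$. Let $L$ be the lattice path from the northeast corner to the southwest corner of the rectangle, using south and west unit steps, that follows the southeast border of $Y$. Catalan path: a lattice path from the northeast corner to the southwest corner of the rectangle using unit south and west steps that never crosses the southeast border of $Y$ (i.e. stays weakly inside $Y$ together with its boundary). Equivalently it is described by $(C_1,\ldots,C_k)$ with $C_1\ge\cdots\ge C_k\ge0$ and $C_i\le\lambda_i$, where $C_i$ is the label of the vertical grid line on which the path's south step in row $i$ lies. Edge weights: a south step lying on the west border of the rectangle (i.e. $C_i=0$) has weight $1/\beta$; any other south step has weight $1$; a west step lying on $L$ has weight $1/\alpha$; any other west step has weight $1$. The path weight $\mathrm{pwt}(C)$ is the product of the edge weights and $\mathrm{wt}(C)=(\alpha\beta)^n\,\mathrm{pwt}(C)$. Catalan tableau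 of size $(n,k)$ with Young diagram $Y$: a filling of the boxes of $Y$ with $\alpha$'s and $\beta$'s (at most one per box) such that (i) every box in the same column and above an $\alpha$ is empty; (ii) every box in the same row and left of a $\beta$ is empty; (iii) every box not above an $\alpha$ and not left of a $\beta$ contains an $\alpha$ or a $\beta$. Its type is the word read along $L$ from northeast to southwest ($1$ for south, $0$ for west steps); $\lambda(\tau)_i$ is the number of $0$'s after the $i$-th $1$ of $\tau$. Its weight is $\mathrm{wt}(T)=(\alpha\beta)^n(1/\alpha)^{f_{\mathrm{col}}(T)}(1/\beta)^{f_{\mathrm{row}}(T)}$, where $f_{\mathrm{col}}(T)$ is the number of columns of the rectangle containing no $\alpha$ and $f_{\mathrm{row}}(T)$ the number of rows of the rectangle containing no $\beta$. *)

theory Defs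
  imports Main "HOL.Real"
begin

definition young_shape :: "nat \<Rightarrow> nat \<Rightarrow> (nat \<Rightarrow> nat) \<Rightarrow> bool" where
  "young_shape n k lam \<longleftrightarrow>
     (\<forall>i\<in>{1..k}. lam i \<le> n - k) \<and> (\<forall>i\<in>{1..<k}. lam (Suc i) \<le> lam i)"

definition ext :: "nat \<Rightarrow> nat \<Rightarrow> (nat \<Rightarrow> nat) \<Rightarrow> nat \<Rightarrow> nat" where
  "ext n k f j = (if j = 0 then n - k else if j \<le> k then f j else 0)"

text \<open>Catalan paths, encoded by (C_1,...,C_k); values outside 1..k are fixed to 0.\<close>
definition catalan_paths :: "nat \<Rightarrow> nat \<Rightarrow> (nat \<Rightarrow> nat) \<Rightarrow> (nat \<Rightarrow> nat) set" where
  "catalan_paths n k lam = {C. (\<forall>i\<in>{1..<k}. C (Suc i) \<le> C i) \<and> (\<forall>i\<in>{1..k}. C i \<le> lam i)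
                               \<and> (\<forall>i. i \<notin> {1..k} \<longrightarrow> C i = 0)}"

text \<open>Number of south steps on the west border (C_i = 0).\<close>
definition path_south_border :: "nat \<Rightarrow> (nat \<Rightarrow> nat) \<Rightarrow> nat" where
  "path_south_border k C = card {i\<in>{1..k}. C i = 0}"

text \<open>Number of west steps lying on L.  On the horizontal grid line j (j = 0..k, counted from
  the top), the path has west steps from x to x-1 for ext C (j+1) < x \<le> ext C j, and L has
  horizontal edges from x to x-1 for ext lam (j+1) < x \<le> ext lam j.\<close>
definition path_west_on_L :: "nat \<Rightarrow> nat \<Rightarrow> (nat \<Rightarrow> nat) \<Rightarrow> (nat \<Rightarrow> nat) \<Rightarrow> nat" where
  "path_west_on_L n k lam C = card {(j, x). j \<le> k \<and>
      ext n k C (Suc j) < x \<and> x \<le> ext n k C j \<and>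
      ext n k lam (Suc j) < x \<and> x \<le> ext n k lam j}"

definition path_pwt :: "nat \<Rightarrow> nat \<Rightarrow> (nat \<Rightarrow> nat) \<Rightarrow> real \<Rightarrow> real \<Rightarrow> (nat \<Rightarrow> nat) \<Rightarrow> real" where
  "path_pwt n k lam \<alpha> \<beta> C =
     (1 / \<beta>) ^ path_south_border k C * (1 / \<alpha>) ^ path_west_on_L n k lam C"

definition path_wt :: "nat \<Rightarrow> nat \<Rightarrow> (nat \<Rightarrow> nat) \<Rightarrow> real \<Rightarrow> real \<Rightarrow> (nat \<Rightarrow> nat) \<Rightarrow> real" where
  "path_wt n k lam \<alpha> \<beta> C = (\<alpha> * \<beta>) ^ n * path_pwt n k lam \<alpha> \<beta> C"

text \<open>Fillings: box (i,j) is row i (1..k, top to bottom), column j (1..n-k, left to right).\<close>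
datatype cell = Emp | Alpha | Beta

definition in_Y :: "nat \<Rightarrow> (nat \<Rightarrow> nat) \<Rightarrow> nat \<times> nat \<Rightarrow> bool" where
  "in_Y k lam b \<longleftrightarrow> 1 \<le> fst b \<and> fst b \<le> k \<and> 1 \<le> snd b \<and> snd b \<le> lam (fst b)"

definition catalan_tableaux :: "nat \<Rightarrow> nat \<Rightarrow> (nat \<Rightarrow> nat) \<Rightarrow> (nat \<times> nat \<Rightarrow> cell) set" where
  "catalan_tableaux n k lam = {T.
     (\<forall>b. \<not> in_Y k lam b \<longrightarrow> T b = Emp) \<and>
     \<comment> \<open>(i) boxes in the same column above an alpha are empty\<close>
     (\<forall>i j i'. in_Y k lam (i, j) \<and> T (i, j) = Alpha \<and> in_Y k lam (i', j) \<and> i' < i \<longrightarrow> T (i', j) = Emp) \<and>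
     \<comment> \<open>(ii) boxes in the same row left of a beta are empty\<close>
     (\<forall>i j j'. in_Y k lam (i, j) \<and> T (i, j) = Beta \<and> in_Y k lam (i, j') \<and> j' < j \<longrightarrow> T (i, j') = Emp) \<and>
     \<comment> \<open>(iii) boxes neither above an alpha nor left of a beta are filled\<close>
     (\<forall>i j. in_Y k lam (i, j) \<and>
        \<not> (\<exists>i'. i < i' \<and> in_Y k lam (i', j) \<and> T (i', j) = Alpha) \<and>
        \<not> (\<exists>j'. j < j' \<and> in_Y k lam (i, j') \<and> T (i, j') = Beta) \<longrightarrow> T (i, j) \<noteq> Emp)}"

definition f_col :: "nat \<Rightarrow> nat \<Rightarrow> (nat \<times> nat \<Rightarrow> cell) \<Rightarrow> nat" where
  "f_col n k T = card {j\<in>{1..n-k}. \<not> (\<exists>i\<in>{1..k}. T (i, j) = Alpha)}"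

definition f_row :: "nat \<Rightarrow> nat \<Rightarrow> (nat \<times> nat \<Rightarrow> cell) \<Rightarrow> nat" where
  "f_row n k T = card {i\<in>{1..k}. \<not> (\<exists>j\<in>{1..n-k}. T (i, j) = Beta)}"

definition tab_wt :: "nat \<Rightarrow> nat \<Rightarrow> real \<Rightarrow> real \<Rightarrow> (nat \<times> nat \<Rightarrow> cell) \<Rightarrow> real" where
  "tab_wt n k \<alpha> \<beta> T = (\<alpha> * \<beta>) ^ n * (1 / \<alpha>) ^ f_col n k T * (1 / \<beta>) ^ f_row n k T"

end

theory Submission
  imports Defs
begin


definition ys :: "nat \<Rightarrow> nat \<Rightarrow> (nat \<Rightarrow> nat) \<Rightarrow> bool" where
  "ys k m lam \<longleftrightarrow> (\<forall>i\<in>{1..k}. lam i \<le> m) \<and> (\<forall>i\<in>{1..<k}. lam (Suc i) \<le> lam i)"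

definition Wst :: "nat \<Rightarrow> nat \<Rightarrow> (nat \<Rightarrow> nat) \<Rightarrow> (nat \<Rightarrow> nat) \<Rightarrow> nat" where
  "Wst k m lam C = card {x\<in>{1..m}. \<forall>i\<in>{1..k}. x \<le> lam i \<longrightarrow> x \<le> C i}"

definition Ast :: "nat \<Rightarrow> nat \<Rightarrow> (nat \<times> nat \<Rightarrow> cell) \<Rightarrow> nat" where
  "Ast k m T = card {j\<in>{1..m}. \<not> (\<exists>i\<in>{1..k}. T (i, j) = Alpha)}"

definition Rst :: "nat \<Rightarrow> nat \<Rightarrow> (nat \<times> nat \<Rightarrow> cell) \<Rightarrow> nat" where
  "Rst k m T = card {i\<in>{1..k}. \<not> (\<exists>j\<in>{1..m}. T (i, j) = Beta)}"

lemma mono_seq: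
  assumes "\<forall>i\<in>{1..<k}. f (Suc i) \<le> (f i::nat)" "1 \<le> i" "i \<le> j" "j \<le> k"
  shows "f j \<le> f i"
  using assms(3,4)
proof (induction j rule: dec_induct)
  case base then show ?case by simp
next
  case (step j)
  then have "f (Suc j) \<le> f j" using assms(1,2) by auto
  then show ?case using step by simp
qed

lemma interval_set:
  assumes "S \<subseteq> {1..h}" "\<forall>i\<in>S. \<forall>j. 1 \<le> j \<longrightarrow> j \<le> i \<longrightarrow> j \<in> S"
  shows "S = {1..card S}"
proof (cases "S = {}")
  case True then show ?thesis by simp
next
  case False
  have fin: "finite S" using assms(1) finite_subset by blast
  define t where "t = Max S"
  have tS: "t \<in> S" using fin False t_def by simp
  have "S = {1..t}"
  proof
    show "S \<subseteq> {1..t}" using assms(1) fin t_def by auto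
    show "{1..t} \<subseteq> S" using assms(2) tS by auto
  qed
  then show ?thesis by simp
qed

lemma ext_mono:
  assumes "ys k (n - k) lam" "j \<le> j'"
  shows "ext n k lam j' \<le> ext n k lam j"
  using assms mono_seq[of k lam j j'] unfolding ys_def ext_def by auto

lemma west_eq:
  assumes Y: "ys k (n - k) lam" and C: "C \<in> catalan_paths n k lam"
  shows "path_west_on_L n k lam C = Wst k (n - k) lam C"
proof -
  let ?P = "{(j, x). j \<le> k \<and>
      ext n k C (Suc j) < x \<and> x \<le> ext n k C j \<and>
      ext n k lam (Suc j) < x \<and> x \<le> ext n k lam j}"
  let ?W = "{x\<in>{1..n-k}. \<forall>i\<in>{1..k}. x \<le> lam i \<longrightarrow> x \<le> C i}"
  have Cd: "\<forall>i\<in>{1..<k}. C (Suc i) \<le> C i" "\<forall>i\<in>{1..k}. C i \<le> lam i"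
    using C unfolding catalan_paths_def by auto
  have Cl: "ext n k C j \<le> ext n k lam j" for j
    using Cd unfolding ext_def by auto
  have key: "j = j'" if "(j,x) \<in> ?P" "(j',x) \<in> ?P" for j j' x
  proof (rule ccontr)
    assume "j \<noteq> j'"
    then consider "j < j'" | "j' < j" by linarith
    then show False
    proof cases
      case 1 then have "ext n k lam j' \<le> ext n k lam (Suc j)" using ext_mono[OF Y] by simp
      then show False using that by auto
    next
      case 2 then have "ext n k lam j \<le> ext n k lam (Suc j')" using ext_mono[OF Y] by simp
      then show False using that by auto
    qed
  qed
  have inj: "inj_on snd ?P"
  proof (rule inj_onI)
    fix p q assume p: "p \<in> ?P" and q: "q \<in> ?P" and e: "snd p = snd q"
    have "(fst p, snd p) \<in> ?P" "(fst q, snd p) \<in> ?P" using p q e by auto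
    then have "fst p = fst q" by (rule key)
    then show "p = q" using e by (simp add: prod_eq_iff)
  qed
  have img: "snd ` ?P = ?W"
  proof
    show "snd ` ?P \<subseteq> ?W"
    proof
      fix x assume "x \<in> snd ` ?P"
      then obtain j where jx: "j \<le> k" "ext n k C (Suc j) < x" "x \<le> ext n k C j"
        "ext n k lam (Suc j) < x" "x \<le> ext n k lam j" by auto
      have x1: "1 \<le> x" using jx by simp
      have xm: "x \<le> n - k" using jx(5) ext_mono[OF Y, of 0 j] by (simp add: ext_def)
      have "x \<le> C i" if i: "i \<in> {1..k}" "x \<le> lam i" for i
      proof -
        have "i \<le> j"
        proof (rule ccontr)
          assume "\<not> i \<le> j"
          then have "ext n k lam i \<le> ext n k lam (Suc j)" using ext_mono[OF Y] by simp
          then show False using i jx by (auto simp: ext_def split: if_splits)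
        qed
        then have "j \<ge> 1" "j \<le> k" using i jx by auto
        then have "x \<le> C j" using jx by (simp add: ext_def)
        also have "C j \<le> C i" using mono_seq[OF Cd(1), of i j] \<open>i \<le> j\<close> \<open>j \<le> k\<close> i by auto
        finally show ?thesis .
      qed
      then show "x \<in> ?W" using x1 xm by auto
    qed
    show "?W \<subseteq> snd ` ?P"
    proof
      fix x assume xW: "x \<in> ?W"
      define j where "j = Max {i\<in>{0..k}. x \<le> ext n k lam i}"
      have fin: "finite {i\<in>{0..k}. x \<le> ext n k lam i}" by simp
      have ne: "0 \<in> {i\<in>{0..k}. x \<le> ext n k lam i}" using xW by (simp add: ext_def)
      have jin: "j \<in> {i\<in>{0..k}. x \<le> ext n k lam i}" using Max_in[OF fin] ne j_def by blast
      have jmax: "i \<le> j" if "i \<le> k" "x \<le> ext n k lam i" for i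
        using Max_ge[OF fin] that j_def by auto
      have a1: "ext n k lam (Suc j) < x"
      proof (cases "Suc j \<le> k")
        case True then show ?thesis using jmax[of "Suc j"] by force
      next
        case False then show ?thesis using xW by (simp add: ext_def)
      qed
      have a2: "x \<le> ext n k C j"
      proof (cases "j = 0")
        case True then show ?thesis using xW by (simp add: ext_def)
      next
        case False then show ?thesis using xW jin by (auto simp: ext_def)
      qed
      have a3: "ext n k C (Suc j) < x" using Cl[of "Suc j"] a1 by simp
      have "(j, x) \<in> ?P" using jin a1 a2 a3 by auto
      then show "x \<in> snd ` ?P" by force
    qed
  qed
  have "path_west_on_L n k lam C = card ?P" by (simp add: path_west_on_L_def)
  also have "\<dots> = card (snd ` ?P)" using card_image[OF inj] by simp
  also have "\<dots> = Wst k (n - k) lam C" using img by (simp add: Wst_def)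
  finally show ?thesis .
qed




definition lamA :: "nat \<Rightarrow> nat \<Rightarrow> nat \<Rightarrow> (nat\<Rightarrow>nat) \<Rightarrow> nat \<Rightarrow> nat" where
  "lamA M a d lam i = (if i \<le> a then M - 1 else lam (i + d))"
definition pdec :: "nat \<Rightarrow> nat \<Rightarrow> (nat\<Rightarrow>nat) \<Rightarrow> nat \<Rightarrow> nat" where
  "pdec k d C i = (if 1 \<le> i \<and> i \<le> k - d then C (i + d) else 0)"
definition pinc :: "nat \<Rightarrow> nat \<Rightarrow> nat \<Rightarrow> (nat\<Rightarrow>nat) \<Rightarrow> nat \<Rightarrow> nat" where
  "pinc k M d C' i = (if 1 \<le> i \<and> i \<le> k then (if i \<le> d then M else C' (i - d)) else 0)"
definition pidx :: "nat \<Rightarrow> nat \<Rightarrow> (nat\<Rightarrow>nat) \<Rightarrow> nat" where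
  "pidx h M C = h - card {i\<in>{1..h}. C i = M}"

context
  fixes k m M h :: nat and lam :: "nat \<Rightarrow> nat"
  assumes dec: "\<forall>i\<in>{1..<k}. lam (Suc i) \<le> lam i"
    and M1: "1 \<le> M" and Mm: "M \<le> m" and h1: "1 \<le> h" and hk: "h \<le> k"
    and top: "\<forall>i\<in>{1..h}. lam i = M"
    and low: "\<forall>i. h < i \<and> i \<le> k \<longrightarrow> lam i < M"
begin

lemma lam_le_M: assumes "i \<in> {1..k}" shows "lam i \<le> M"
proof (cases "i \<le> h")
  case True then show ?thesis using top assms by auto
next
  case False
  then show ?thesis using low[rule_format, of i] assms by auto
qed

lemma path_SP:
  assumes C: "C \<in> catalan_paths 0 k lam"
  shows "{i\<in>{1..h}. C i = M} = {1..h - pidx h M C}" "pidx h M C \<le> h"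
proof -
  let ?S = "{i\<in>{1..h}. C i = M}"
  have Cd: "\<forall>i\<in>{1..<k}. C (Suc i) \<le> C i" "\<forall>i\<in>{1..k}. C i \<le> lam i"
    using C unfolding catalan_paths_def by auto
  have dc: "\<forall>i\<in>?S. \<forall>j. 1 \<le> j \<longrightarrow> j \<le> i \<longrightarrow> j \<in> ?S"
  proof (intro ballI allI impI)
    fix i j assume i: "i \<in> ?S" and j: "1 \<le> j" "j \<le> i"
    have ik: "i \<le> k" using i hk by simp
    have "C i \<le> C j" using mono_seq[OF Cd(1) j(1) j(2) ik] .
    moreover have "j \<in> {1..k}" "j \<in> {1..h}" using i j hk by auto
    then have "C j \<le> M" using Cd(2) top by metis
    ultimately show "j \<in> ?S" using i j \<open>j \<in> {1..h}\<close> by simp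
  qed
  have sub: "?S \<subseteq> {1..h}" by blast
  have e: "?S = {1..card ?S}" by (rule interval_set[OF sub dc])
  have "card ?S \<le> card {1..h}" by (rule card_mono[OF _ sub]) simp
  then have ch: "card ?S \<le> h" by simp
  have p: "pidx h M C = h - card ?S" by (simp add: pidx_def)
  show "pidx h M C \<le> h" using p by simp
  have "h - pidx h M C = card ?S" using p ch by simp
  then show "?S = {1..h - pidx h M C}" using e by simp
qed

context
  fixes a d :: nat assumes ad: "a + d = h"
begin

lemma hd: "h - a = d" using ad by arith

lemma ys_lamA: "\<forall>i\<in>{1..<k - d}. lamA M a d lam (Suc i) \<le> lamA M a d lam i"
proof
  fix i assume i: "i \<in> {1..<k - d}"
  show "lamA M a d lam (Suc i) \<le> lamA M a d lam i"
  proof (cases "Suc i \<le> a")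
    case True then show ?thesis by (simp add: lamA_def)
  next
    case F: False
    show ?thesis
    proof (cases "i \<le> a")
      case True
      then have "i = a" using F by simp
      then have "lam (Suc i + d) < M" using low[rule_format, of "Suc i + d"] i ad by auto
      then show ?thesis using \<open>i = a\<close> by (simp add: lamA_def)
    next
      case False
      then have "i + d \<in> {1..<k}" using i by auto
      then have "lam (Suc (i + d)) \<le> lam (i + d)" using dec by blast
      then show ?thesis using False F by (simp add: lamA_def)
    qed
  qed
qed

lemma lamA_le: assumes "i \<in> {1..k - d}" shows "lamA M a d lam i \<le> M - 1"
proof (cases "i \<le> a")
  case False
  then have "lam (i + d) < M" using low[rule_format, of "i + d"] ad assms by auto
  then show ?thesis using False by (simp add: lamA_def)
qed (simp add: lamA_def)

lemma lamA_le_lam: assumes "i \<in> {1..k - d}" shows "lamA M a d lam i \<le> lam (i + d)"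
proof (cases "i \<le> a")
  case True
  then have "lam (i + d) = M" using top ad assms by auto
  then show ?thesis using True by (simp add: lamA_def)
qed (simp add: lamA_def)

lemma pdec_in:
  assumes C: "C \<in> catalan_paths 0 k lam" and ix: "pidx h M C = a"
  shows "pdec k d C \<in> catalan_paths 0 (k - d) (lamA M a d lam)"
proof -
  have Cd: "\<forall>i\<in>{1..<k}. C (Suc i) \<le> C i" "\<forall>i\<in>{1..k}. C i \<le> lam i"
    using C unfolding catalan_paths_def by auto
  have S: "{i\<in>{1..h}. C i = M} = {1..d}" using path_SP(1)[OF C] ix hd by simp
  have b: "C (i + d) \<le> lamA M a d lam i" if "i \<in> {1..k - d}" for i
  proof (cases "i \<le> a")
    case True
    then have "i + d \<notin> {1..d}" "i + d \<in> {1..h}" using that ad by auto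
    then have "C (i + d) \<noteq> M" using S by blast
    moreover have "C (i + d) \<le> M" using Cd(2) top \<open>i + d \<in> {1..h}\<close> hk by force
    ultimately show ?thesis using True by (simp add: lamA_def)
  next
    case False
    then have "i + d \<in> {1..k}" using that by auto
    then show ?thesis using Cd(2) False by (auto simp: lamA_def)
  qed
  have d1: "C (Suc i + d) \<le> C (i + d)" if "i \<in> {1..<k-d}" for i
  proof -
    have "i + d \<in> {1..<k}" using that by auto
    then show ?thesis using Cd(1) by auto
  qed
  show ?thesis unfolding catalan_paths_def
    using d1 b by (auto simp: pdec_def)
qed

lemma pinc_in:
  assumes C: "C' \<in> catalan_paths 0 (k - d) (lamA M a d lam)"
  shows "pinc k M d C' \<in> catalan_paths 0 k lam" "pidx h M (pinc k M d C') = a"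
proof -
  have Cd: "\<forall>i\<in>{1..<k - d}. C' (Suc i) \<le> C' i" "\<forall>i\<in>{1..k - d}. C' i \<le> lamA M a d lam i"
    and C0: "\<forall>i. i \<notin> {1..k - d} \<longrightarrow> C' i = 0"
    using C unfolding catalan_paths_def by auto
  let ?C = "pinc k M d C'"
  have d1: "?C (Suc i) \<le> ?C i" if i: "i \<in> {1..<k}" for i
  proof (cases "Suc i \<le> d")
    case True then show ?thesis using i by (simp add: pinc_def)
  next
    case F: False
    show ?thesis
    proof (cases "i \<le> d")
      case True
      then have "i = d" using F by simp
      then have "?C (Suc i) = C' 1" using i by (simp add: pinc_def)
      also have "\<dots> \<le> M - 1"
      proof (cases "1 \<le> k - d")
        case True
        then have "C' 1 \<le> lamA M a d lam 1" using Cd(2) by auto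
        then show ?thesis using lamA_le[of 1] True by auto
      qed (use C0 in auto)
      finally show ?thesis using \<open>i = d\<close> i by (simp add: pinc_def)
    next
      case False
      then have "?C (Suc i) = C' (Suc (i - d))" "?C i = C' (i - d)" using i by (auto simp: pinc_def Suc_diff_le)
      moreover have "i - d \<in> {1..<k - d}" using i False by auto
      ultimately show ?thesis using Cd(1) by simp
    qed
  qed
  have d2: "?C i \<le> lam i" if i: "i \<in> {1..k}" for i
  proof (cases "i \<le> d")
    case True then show ?thesis using i top ad by (auto simp: pinc_def)
  next
    case False
    then have "i - d \<in> {1..k - d}" using i by auto
    then have "C' (i - d) \<le> lam (i - d + d)" using Cd(2) lamA_le_lam le_trans by blast
    then show ?thesis using False i by (simp add: pinc_def)
  qed
  show "?C \<in> catalan_paths 0 k lam" unfolding catalan_paths_def using d1 d2 by (auto simp: pinc_def)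
  have "{i\<in>{1..h}. ?C i = M} = {1..d}"
  proof (rule set_eqI, rule iffI)
    fix i assume "i \<in> {i\<in>{1..h}. ?C i = M}"
    then have i: "i \<in> {1..h}" "?C i = M" by auto
    show "i \<in> {1..d}"
    proof (rule ccontr)
      assume nd: "i \<notin> {1..d}"
      then have "i - d \<in> {1..k - d}" "i - d \<le> a" using i hk ad by auto
      then have "C' (i - d) \<le> M - 1" using Cd(2) lamA_le le_trans by blast
      moreover have "?C i = C' (i - d)" using nd i hk by (auto simp: pinc_def)
      ultimately show False using i M1 by auto
    qed
  next
    fix i assume "i \<in> {1..d}" then show "i \<in> {i\<in>{1..h}. ?C i = M}" using hk ad by (auto simp: pinc_def)
  qed
  then show "pidx h M ?C = a" using ad by (simp add: pidx_def)
qed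

lemma pdec_pinc: assumes "C' \<in> catalan_paths 0 (k - d) (lamA M a d lam)" shows "pdec k d (pinc k M d C') = C'"
proof (rule ext)
  fix i
  have C0: "\<forall>i. i \<notin> {1..k - d} \<longrightarrow> C' i = 0" using assms unfolding catalan_paths_def by auto
  show "pdec k d (pinc k M d C') i = C' i"
  proof (cases "i \<in> {1..k - d}")
    case True then show ?thesis by (auto simp: pdec_def pinc_def)
  next
    case False then show ?thesis using C0 by (auto simp: pdec_def)
  qed
qed

lemma pinc_pdec:
  assumes C: "C \<in> catalan_paths 0 k lam" and ix: "pidx h M C = a"
  shows "pinc k M d (pdec k d C) = C"
proof (rule ext)
  fix i
  have S: "{i\<in>{1..h}. C i = M} = {1..d}" using path_SP(1)[OF C] ix hd by simp
  have C0: "\<forall>i. i \<notin> {1..k} \<longrightarrow> C i = 0" using C unfolding catalan_paths_def by auto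
  show "pinc k M d (pdec k d C) i = C i"
  proof (cases "i \<in> {1..k}")
    case False then show ?thesis using C0 by (auto simp: pinc_def)
  next
    case True
    show ?thesis
    proof (cases "i \<le> d")
      case T2: True
      then have "i \<in> {1..d}" using True by auto
      then have "C i = M" using S by blast
      then show ?thesis using True T2 by (simp add: pinc_def)
    next
      case False then show ?thesis using True by (auto simp: pinc_def pdec_def)
    qed
  qed
qed

lemma bij_path:
  "bij_betw (pdec k d) {C\<in>catalan_paths 0 k lam. pidx h M C = a} (catalan_paths 0 (k - d) (lamA M a d lam))"
proof (rule bij_betw_byWitness[where f' = "pinc k M d"])
  show "\<forall>C\<in>{C\<in>catalan_paths 0 k lam. pidx h M C = a}. pinc k M d (pdec k d C) = C"
    using pinc_pdec by blast
  show "\<forall>C\<in>catalan_paths 0 (k - d) (lamA M a d lam). pdec k d (pinc k M d C) = C"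
    using pdec_pinc by blast
  show "pdec k d ` {C\<in>catalan_paths 0 k lam. pidx h M C = a} \<subseteq> catalan_paths 0 (k - d) (lamA M a d lam)"
    using pdec_in by blast
  show "pinc k M d ` catalan_paths 0 (k - d) (lamA M a d lam) \<subseteq> {C\<in>catalan_paths 0 k lam. pidx h M C = a}"
    using pinc_in by blast
qed

end
end



context
  fixes k m M h :: nat and lam :: "nat \<Rightarrow> nat"
  assumes dec: "\<forall>i\<in>{1..<k}. lam (Suc i) \<le> lam i"
    and M1: "1 \<le> M" and Mm: "M \<le> m" and h1: "1 \<le> h" and hk: "h \<le> k"
    and top: "\<forall>i\<in>{1..h}. lam i = M"
    and low: "\<forall>i. h < i \<and> i \<le> k \<longrightarrow> lam i < M"
begin

context
  fixes a d :: nat assumes ad: "a + d = h"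
begin

lemma south_pinc:
  assumes C: "C' \<in> catalan_paths 0 (k - d) (lamA M a d lam)"
  shows "path_south_border k (pinc k M d C') = path_south_border (k - d) C'"
proof -
  have "{i\<in>{1..k}. pinc k M d C' i = 0} = (\<lambda>i. i + d) ` {i\<in>{1..k - d}. C' i = 0}"
  proof (rule set_eqI, rule iffI)
    fix i assume i: "i \<in> {i\<in>{1..k}. pinc k M d C' i = 0}"
    then have "\<not> i \<le> d" using M1 by (auto simp: pinc_def)
    then have "i - d \<in> {i\<in>{1..k - d}. C' i = 0}" "i = i - d + d" using i by (auto simp: pinc_def)
    then show "i \<in> (\<lambda>i. i + d) ` {i\<in>{1..k - d}. C' i = 0}" by blast
  next
    fix i assume "i \<in> (\<lambda>i. i + d) ` {i\<in>{1..k - d}. C' i = 0}"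
    then obtain j where "i = j + d" "j \<in> {1..k - d}" "C' j = 0" by auto
    then show "i \<in> {i\<in>{1..k}. pinc k M d C' i = 0}" by (auto simp: pinc_def)
  qed
  moreover have "inj_on (\<lambda>i. i + d) X" for X by (rule inj_onI) simp
  ultimately show ?thesis unfolding path_south_border_def by (simp add: card_image)
qed

lemma card3:
  fixes W :: "nat set"
  assumes "W \<subseteq> {1..m}" "{M<..m} \<subseteq> W"
  shows "card W = card (W \<inter> {..<M}) + card (W \<inter> {M}) + (m - M)"
proof -
  have W: "W = (W \<inter> {..<M}) \<union> (W \<inter> {M}) \<union> {M<..m}" using assms by auto
  have f: "finite (W \<inter> {..<M})" "finite (W \<inter> {M})" by auto
  have "card W = card ((W \<inter> {..<M}) \<union> (W \<inter> {M}) \<union> {M<..m})" using W by simp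
  also have "\<dots> = card ((W \<inter> {..<M}) \<union> (W \<inter> {M})) + card {M<..m}"
    by (rule card_Un_disjoint) auto
  also have "card ((W \<inter> {..<M}) \<union> (W \<inter> {M})) = card (W \<inter> {..<M}) + card (W \<inter> {M})"
    by (rule card_Un_disjoint) auto
  finally show ?thesis by simp
qed

lemma west_pinc:
  assumes C: "C' \<in> catalan_paths 0 (k - d) (lamA M a d lam)"
  shows "Wst k m lam (pinc k M d C') = Wst (k - d) (m - 1) (lamA M a d lam) C' + (if a = 0 then 1 else 0)"
proof -
  have Cd: "\<forall>i\<in>{1..k - d}. C' i \<le> lamA M a d lam i"
    using C unfolding catalan_paths_def by auto
  let ?C = "pinc k M d C'"
  define W where "W = {x\<in>{1..m}. \<forall>i\<in>{1..k}. x \<le> lam i \<longrightarrow> x \<le> ?C i}"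
  define W' where "W' = {x\<in>{1..m - 1}. \<forall>i\<in>{1..k - d}. x \<le> lamA M a d lam i \<longrightarrow> x \<le> C' i}"
  have lt: "x \<in> W \<longleftrightarrow> x \<in> W'" if x: "x < M" for x
  proof
    assume xW: "x \<in> W"
    have "x \<le> C' i'" if i': "i' \<in> {1..k - d}" "x \<le> lamA M a d lam i'" for i'
    proof -
      have "x \<le> lam (i' + d)" using lamA_le_lam[OF dec M1 Mm h1 hk top low ad i'(1)] i'(2) by simp
      moreover have "i' + d \<in> {1..k}" using i' by auto
      ultimately have "x \<le> ?C (i' + d)" using xW W_def by blast
      moreover have "?C (i' + d) = C' i'" using i' by (auto simp: pinc_def)
      ultimately show ?thesis by simp
    qed
    then show "x \<in> W'" using xW x Mm unfolding W_def W'_def by auto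
  next
    assume xW: "x \<in> W'"
    have "x \<le> ?C i" if i: "i \<in> {1..k}" "x \<le> lam i" for i
    proof (cases "i \<le> d")
      case True then show ?thesis using i x by (simp add: pinc_def)
    next
      case False
      then have i': "i - d \<in> {1..k - d}" using i by auto
      have "x \<le> lamA M a d lam (i - d)"
        using x i(2) False by (auto simp: lamA_def)
      then have "x \<le> C' (i - d)" using xW i' W'_def by blast
      then show ?thesis using i False by (simp add: pinc_def)
    qed
    then show "x \<in> W" using xW x Mm unfolding W_def W'_def by auto
  qed
  have Mw: "(M \<in> W) = (a = 0)"
  proof
    assume MW: "M \<in> W"
    show "a = 0"
    proof (rule ccontr)
      assume a0: "a \<noteq> 0"
      have hin: "h \<in> {1..k}" "M \<le> lam h" using h1 hk top by auto
      then have "M \<le> ?C h" using MW W_def by blast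
      moreover have "\<not> h \<le> d" using a0 ad by simp
      moreover have "h - d \<in> {1..k - d}" "h - d = a" using a0 ad hk by auto
      ultimately have "M \<le> C' a" using hin by (simp add: pinc_def)
      moreover have "a \<in> {1..k - d}" using \<open>h - d \<in> {1..k - d}\<close> \<open>h - d = a\<close> by simp
      then have "C' a \<le> lamA M a d lam a" using Cd by blast
      then have "C' a \<le> M - 1" by (simp add: lamA_def)
      ultimately show False using M1 by simp
    qed
  next
    assume a0: "a = 0"
    have "M \<le> ?C i" if i: "i \<in> {1..k}" "M \<le> lam i" for i
    proof -
      have "i \<le> h" using low i by (meson leD not_le_imp_less atLeastAtMost_iff)
      then show ?thesis using i a0 ad by (simp add: pinc_def)
    qed
    then show "M \<in> W" using M1 Mm W_def by auto
  qed
  have gt: "{M<..m} \<subseteq> W"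
  proof
    fix x assume x: "x \<in> {M<..m}"
    have "\<not> x \<le> lam i" if "i \<in> {1..k}" for i
      using lam_le_M[OF dec M1 Mm h1 hk top low that] x by simp
    then show "x \<in> W" using x W_def by auto
  qed
  have gt': "{M - 1<..m - 1} \<subseteq> W'"
  proof
    fix x assume x: "x \<in> {M - 1<..m - 1}"
    have "\<not> x \<le> lamA M a d lam i" if "i \<in> {1..k - d}" for i
      using lamA_le[OF dec M1 Mm h1 hk top low ad that] x by simp
    then show "x \<in> W'" using x W'_def by auto
  qed
  have c1: "card W = card (W \<inter> {..<M}) + card (W \<inter> {M}) + (m - M)"
    by (rule card3) (use gt in \<open>auto simp: W_def\<close>)
  have W'sub: "W' \<subseteq> {1..m - 1}" by (auto simp: W'_def)
  have c2: "card W' = card (W' \<inter> {..<M}) + (m - M)"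
  proof -
    have e: "W' = (W' \<inter> {..<M}) \<union> {M - 1<..m - 1}" using gt' W'sub M1 by auto
    have "card W' = card (W' \<inter> {..<M}) + card {M - 1<..m - 1}"
      by (subst e, rule card_Un_disjoint) auto
    then show ?thesis using M1 Mm by simp
  qed
  have e3: "W \<inter> {..<M} = W' \<inter> {..<M}" using lt by auto
  have e4: "card (W \<inter> {M}) = (if a = 0 then 1 else 0)" using Mw
    by (cases "a = 0") (auto simp: Int_insert_right)
  have "Wst k m lam ?C = card W" by (simp add: Wst_def W_def)
  moreover have "Wst (k - d) (m - 1) (lamA M a d lam) C' = card W'" by (simp add: Wst_def W'_def)
  ultimately show ?thesis using c1 c2 e3 e4 by simp
qed

end
end



lemma inY_iff: "in_Y k lam (i, j) \<longleftrightarrow> 1 \<le> i \<and> i \<le> k \<and> 1 \<le> j \<and> j \<le> lam i"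
  by (simp add: in_Y_def)

lemma tab_out: "T \<in> catalan_tableaux n k lam \<Longrightarrow> \<not> in_Y k lam b \<Longrightarrow> T b = Emp"
  unfolding catalan_tableaux_def by blast

lemma tab_col: "T \<in> catalan_tableaux n k lam \<Longrightarrow> in_Y k lam (i, j) \<Longrightarrow> T (i, j) = Alpha \<Longrightarrow>
    in_Y k lam (i', j) \<Longrightarrow> i' < i \<Longrightarrow> T (i', j) = Emp"
  unfolding catalan_tableaux_def by blast

lemma tab_row: "T \<in> catalan_tableaux n k lam \<Longrightarrow> in_Y k lam (i, j) \<Longrightarrow> T (i, j) = Beta \<Longrightarrow>
    in_Y k lam (i, j') \<Longrightarrow> j' < j \<Longrightarrow> T (i, j') = Emp"
  unfolding catalan_tableaux_def by blast

lemma tab_fill: "T \<in> catalan_tableaux n k lam \<Longrightarrow> in_Y k lam (i, j) \<Longrightarrow>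
    (\<And>i'. i < i' \<Longrightarrow> in_Y k lam (i', j) \<Longrightarrow> T (i', j) \<noteq> Alpha) \<Longrightarrow>
    (\<And>j'. j < j' \<Longrightarrow> in_Y k lam (i, j') \<Longrightarrow> T (i, j') \<noteq> Beta) \<Longrightarrow> T (i, j) \<noteq> Emp"
  unfolding catalan_tableaux_def by blast

lemma tabI:
  assumes "\<And>b. \<not> in_Y k lam b \<Longrightarrow> T b = Emp"
    and "\<And>i j i'. in_Y k lam (i, j) \<Longrightarrow> T (i, j) = Alpha \<Longrightarrow> in_Y k lam (i', j) \<Longrightarrow> i' < i \<Longrightarrow> T (i', j) = Emp"
    and "\<And>i j j'. in_Y k lam (i, j) \<Longrightarrow> T (i, j) = Beta \<Longrightarrow> in_Y k lam (i, j') \<Longrightarrow> j' < j \<Longrightarrow> T (i, j') = Emp"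
    and "\<And>i j. in_Y k lam (i, j) \<Longrightarrow>
    (\<And>i'. i < i' \<Longrightarrow> in_Y k lam (i', j) \<Longrightarrow> T (i', j) \<noteq> Alpha) \<Longrightarrow>
    (\<And>j'. j < j' \<Longrightarrow> in_Y k lam (i, j') \<Longrightarrow> T (i, j') \<noteq> Beta) \<Longrightarrow> T (i, j) \<noteq> Emp"
  shows "T \<in> catalan_tableaux n k lam"
  unfolding catalan_tableaux_def using assms by blast

lemma cell_cases: "c \<noteq> Emp \<Longrightarrow> c \<noteq> Beta \<Longrightarrow> c = Alpha"
  by (cases c) auto

definition phi :: "nat \<Rightarrow> nat \<Rightarrow> nat \<Rightarrow> nat" where
  "phi a d i = (if i \<le> a then i else i + d)"
definition psi :: "nat \<Rightarrow> nat \<Rightarrow> nat \<Rightarrow> nat" where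
  "psi a d i = (if i \<le> a then i else i - d)"
definition tidx :: "nat \<Rightarrow> nat \<Rightarrow> (nat \<times> nat \<Rightarrow> cell) \<Rightarrow> nat" where
  "tidx h M T = card {i\<in>{1..h}. T (i, M) \<noteq> Beta}"
definition tdec :: "nat \<Rightarrow> nat \<Rightarrow> nat \<Rightarrow> (nat \<times> nat \<Rightarrow> cell) \<Rightarrow> nat \<times> nat \<Rightarrow> cell" where
  "tdec M a d T p = (if M \<le> snd p then Emp else T (phi a d (fst p), snd p))"
definition tinc :: "nat \<Rightarrow> (nat \<Rightarrow> nat) \<Rightarrow> nat \<Rightarrow> nat \<Rightarrow> nat \<Rightarrow> nat \<Rightarrow> (nat \<times> nat \<Rightarrow> cell) \<Rightarrow> nat \<times> nat \<Rightarrow> cell" where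
  "tinc k lam M h a d T' p = (if in_Y k lam p then
      (if snd p = M then (if fst p < a then Emp else if fst p = a then Alpha else Beta)
       else if a < fst p \<and> fst p \<le> h then Emp else T' (psi a d (fst p), snd p)) else Emp)"

lemma tdec_app: "tdec M a d T (i, j) = (if M \<le> j then Emp else T (phi a d i, j))"
  by (simp add: tdec_def)
lemma tinc_app: "tinc k lam M h a d T' (i, j) = (if in_Y k lam (i, j) then
      (if j = M then (if i < a then Emp else if i = a then Alpha else Beta)
       else if a < i \<and> i \<le> h then Emp else T' (psi a d i, j)) else Emp)"
  by (simp add: tinc_def)

lemma phi_mono: "phi a d i < phi a d i' \<longleftrightarrow> i < i'"
  by (auto simp: phi_def)

context
  fixes k m M h :: nat and lam :: "nat \<Rightarrow> nat"
  assumes dec: "\<forall>i\<in>{1..<k}. lam (Suc i) \<le> lam i"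
    and M1: "1 \<le> M" and Mm: "M \<le> m" and h1: "1 \<le> h" and hk: "h \<le> k"
    and top: "\<forall>i\<in>{1..h}. lam i = M"
    and low: "\<forall>i. h < i \<and> i \<le> k \<longrightarrow> lam i < M"
begin

lemma inY_le_M: "in_Y k lam (i, j) \<Longrightarrow> j \<le> M"
  using lam_le_M[OF dec M1 Mm h1 hk top low, of i] by (auto simp: inY_iff)

lemma inY_M: "in_Y k lam (i, M) \<longleftrightarrow> 1 \<le> i \<and> i \<le> h"
proof
  assume a: "in_Y k lam (i, M)"
  show "1 \<le> i \<and> i \<le> h"
  proof (rule ccontr)
    assume "\<not> (1 \<le> i \<and> i \<le> h)"
    then have "lam i < M" using a low by (auto simp: inY_iff)
    then show False using a by (auto simp: inY_iff)
  qed
next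
  assume "1 \<le> i \<and> i \<le> h" then show "in_Y k lam (i, M)" using top hk M1 by (auto simp: inY_iff)
qed

lemma tab_SP:
  assumes T: "T \<in> catalan_tableaux n k lam"
  shows "{i\<in>{1..h}. T (i, M) \<noteq> Beta} = {1..tidx h M T}" "tidx h M T \<le> h"
proof -
  let ?S = "{i\<in>{1..h}. T (i, M) \<noteq> Beta}"
  have dc: "\<forall>i\<in>?S. \<forall>j. 1 \<le> j \<longrightarrow> j \<le> i \<longrightarrow> j \<in> ?S"
  proof (intro ballI allI impI)
    fix i j assume i: "i \<in> ?S" and j: "1 \<le> j" "j \<le> i"
    show "j \<in> ?S"
    proof (rule ccontr)
      assume "j \<notin> ?S"
      then have jB: "T (j, M) = Beta" using i j by auto
      have "j \<noteq> i" using i jB by auto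
      then have ji: "j < i" using j by simp
      have iY: "in_Y k lam (i, M)" "in_Y k lam (j, M)" using i j inY_M by auto
      have nA: "T (i', M) \<noteq> Alpha" if "i \<le> i'" "in_Y k lam (i', M)" for i'
      proof
        assume "T (i', M) = Alpha"
        then have "T (j, M) = Emp" using tab_col[OF T that(2) _ iY(2)] ji that by auto
        then show False using jB by simp
      qed
      have "T (i, M) \<noteq> Emp"
      proof (rule tab_fill[OF T iY(1)])
        show "T (i', M) \<noteq> Alpha" if "i < i'" "in_Y k lam (i', M)" for i' using nA that by simp
        show "T (i, j') \<noteq> Beta" if "M < j'" "in_Y k lam (i, j')" for j' using inY_le_M that by fastforce
      qed
      then have "T (i, M) = Alpha" using i by (auto intro: cell_cases)
      then show False using nA[of i] iY by simp
    qed
  qed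
  have sub: "?S \<subseteq> {1..h}" by blast
  have e: "?S = {1..card ?S}" by (rule interval_set[OF sub dc])
  have "card ?S \<le> card {1..h}" by (rule card_mono[OF _ sub]) simp
  then show "tidx h M T \<le> h" by (simp add: tidx_def)
  show "?S = {1..tidx h M T}" using e by (simp add: tidx_def)
qed

context
  fixes a d :: nat assumes ad: "a + d = h"
begin

lemma hd': "h - a = d" using ad by arith

lemma inY': "in_Y (k - d) (lamA M a d lam) (i, j) \<longleftrightarrow> j < M \<and> in_Y k lam (phi a d i, j)"
proof (cases "i \<le> a")
  case True
  then have "i \<ge> 1 \<Longrightarrow> lam i = M" using top ad by auto
  then show ?thesis using True ad hk M1 by (auto simp: inY_iff lamA_def phi_def)
next
  case False
  have l: "i + d \<le> k \<Longrightarrow> lam (i + d) < M" using low ad False by auto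
  show ?thesis
  proof
    assume y: "in_Y (k - d) (lamA M a d lam) (i, j)"
    then have "i + d \<le> k" "j \<le> lam (i + d)" using False by (auto simp: inY_iff lamA_def)
    then have "j < M" using l by simp
    then show "j < M \<and> in_Y k lam (phi a d i, j)" using y False by (auto simp: inY_iff lamA_def phi_def)
  next
    assume "j < M \<and> in_Y k lam (phi a d i, j)"
    then show "in_Y (k - d) (lamA M a d lam) (i, j)" using False by (auto simp: inY_iff lamA_def phi_def)
  qed
qed

lemma phi_out: "phi a d i \<le> a \<or> h < phi a d i"
  using ad by (auto simp: phi_def)

lemma phi_psi: "i \<le> a \<or> h < i \<Longrightarrow> phi a d (psi a d i) = i"
  using ad by (auto simp: phi_def psi_def)

lemma psi_phi: "psi a d (phi a d i) = i"
  by (auto simp: phi_def psi_def)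

lemma psi_range: "i \<in> {1..k} \<Longrightarrow> i \<le> a \<or> h < i \<Longrightarrow> psi a d i \<in> {1..k - d}"
  using ad hk by (auto simp: psi_def)

lemma phi_range: "i \<in> {1..k - d} \<Longrightarrow> phi a d i \<in> {1..k}"
  by (auto simp: phi_def)

context
  fixes T :: "nat \<times> nat \<Rightarrow> cell" and n :: nat
  assumes T: "T \<in> catalan_tableaux n k lam" and ix: "tidx h M T = a"
begin

lemma S_eq: "{i\<in>{1..h}. T (i, M) \<noteq> Beta} = {1..a}" using tab_SP(1)[OF T] ix by simp

lemma F5: assumes "a < i" "i \<le> h" shows "T (i, M) = Beta"
proof (rule ccontr)
  assume "T (i, M) \<noteq> Beta"
  then have "i \<in> {i\<in>{1..h}. T (i, M) \<noteq> Beta}" using assms by auto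
  then have "i \<in> {1..a}" using S_eq by blast
  then show False using assms by simp
qed

lemma F1: assumes "1 \<le> i" "i \<le> a" shows "T (i, M) \<noteq> Beta"
proof -
  have "i \<in> {1..a}" using assms by simp
  then have "i \<in> {i\<in>{1..h}. T (i, M) \<noteq> Beta}" using S_eq by blast
  then show ?thesis by simp
qed

lemma F4a: "1 \<le> a \<Longrightarrow> T (a, M) = Alpha"
proof -
  assume a1: "1 \<le> a"
  have aY: "in_Y k lam (a, M)" using inY_M a1 ad by auto
  have "T (a, M) \<noteq> Emp"
  proof (rule tab_fill[OF T aY])
    show "T (i', M) \<noteq> Alpha" if "a < i'" "in_Y k lam (i', M)" for i'
      using F5[of i'] that inY_M by auto
    show "T (a, j') \<noteq> Beta" if "M < j'" "in_Y k lam (a, j')" for j' using inY_le_M that by fastforce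
  qed
  then show ?thesis using F1[OF a1] by (auto intro: cell_cases)
qed

lemma F4b: "1 \<le> i \<Longrightarrow> i < a \<Longrightarrow> T (i, M) = Emp"
  using tab_col[OF T _ F4a] inY_M ad by auto

lemma F2: "a < i \<Longrightarrow> i \<le> h \<Longrightarrow> 1 \<le> j \<Longrightarrow> j < M \<Longrightarrow> T (i, j) = Emp"
proof -
  assume as: "a < i" "i \<le> h" "1 \<le> j" "j < M"
  have "in_Y k lam (i, M)" using inY_M as by auto
  moreover have "in_Y k lam (i, j)" using as top hk by (auto simp: inY_iff)
  ultimately show ?thesis using tab_row[OF T _ F5[OF as(1,2)]] as by auto
qed

lemma tdec_in: "tdec M a d T \<in> catalan_tableaux n (k - d) (lamA M a d lam)"
proof (rule tabI)
  let ?T = "tdec M a d T"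
  show "?T b = Emp" if "\<not> in_Y (k - d) (lamA M a d lam) b" for b
  proof -
    obtain i j where b: "b = (i, j)" by force
    show ?thesis using that tab_out[OF T] unfolding b inY' by (auto simp: tdec_app)
  qed
  show "?T (i', j) = Emp" if "in_Y (k - d) (lamA M a d lam) (i, j)" "?T (i, j) = Alpha"
    "in_Y (k - d) (lamA M a d lam) (i', j)" "i' < i" for i j i'
    using that tab_col[OF T, of "phi a d i" j "phi a d i'"] phi_mono[of a d i' i]
    by (auto simp: tdec_app inY')
  show "?T (i, j') = Emp" if "in_Y (k - d) (lamA M a d lam) (i, j)" "?T (i, j) = Beta"
    "in_Y (k - d) (lamA M a d lam) (i, j')" "j' < j" for i j j'
    using that tab_row[OF T, of "phi a d i" j j'] by (auto simp: tdec_app inY')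
  show "?T (i, j) \<noteq> Emp" if Y: "in_Y (k - d) (lamA M a d lam) (i, j)"
    and nA: "\<And>i'. i < i' \<Longrightarrow> in_Y (k - d) (lamA M a d lam) (i', j) \<Longrightarrow> ?T (i', j) \<noteq> Alpha"
    and nB: "\<And>j'. j < j' \<Longrightarrow> in_Y (k - d) (lamA M a d lam) (i, j') \<Longrightarrow> ?T (i, j') \<noteq> Beta" for i j
  proof -
    have jM: "j < M" and Y0: "in_Y k lam (phi a d i, j)" using Y inY' by auto
    have "T (phi a d i, j) \<noteq> Emp"
    proof (rule tab_fill[OF T Y0])
      fix i'' assume i'': "phi a d i < i''" "in_Y k lam (i'', j)"
      show "T (i'', j) \<noteq> Alpha"
      proof (cases "a < i'' \<and> i'' \<le> h")
        case True then show ?thesis using F2[of i'' j] i'' jM by (auto simp: inY_iff)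
      next
        case False
        then have pp: "phi a d (psi a d i'') = i''" using phi_psi by auto
        then have "i < psi a d i''" using i''(1) phi_mono[of a d i "psi a d i''"] by simp
        moreover have "in_Y (k - d) (lamA M a d lam) (psi a d i'', j)" using inY' pp jM i''(2) by simp
        ultimately have "?T (psi a d i'', j) \<noteq> Alpha" using nA by blast
        then show ?thesis using pp jM by (simp add: tdec_app)
      qed
    next
      fix j' assume j': "j < j'" "in_Y k lam (phi a d i, j')"
      show "T (phi a d i, j') \<noteq> Beta"
      proof (cases "j' < M")
        case True
        then have "?T (i, j') \<noteq> Beta" using nB j' inY' by simp
        then show ?thesis using True by (simp add: tdec_app)
      next
        case False
        then have "j' = M" using inY_le_M j'(2) by fastforce
        then have "1 \<le> phi a d i \<and> phi a d i \<le> h" using inY_M j'(2) by simp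
        then have "phi a d i \<le> a" using phi_out[of i] by auto
        then show ?thesis using F1 \<open>j' = M\<close> \<open>1 \<le> phi a d i \<and> phi a d i \<le> h\<close> by auto
      qed
    qed
    then show ?thesis using jM by (simp add: tdec_app)
  qed
qed

lemma tinc_tdec: "tinc k lam M h a d (tdec M a d T) = T"
proof (rule ext)
  fix p
  obtain i j :: nat where p: "p = (i, j)" by force
  show "tinc k lam M h a d (tdec M a d T) p = T p"
  proof (cases "in_Y k lam (i, j)")
    case False then show ?thesis using tab_out[OF T] p by (simp add: tinc_app)
  next
    case Y: True
    then have jM: "j \<le> M" "1 \<le> i" "1 \<le> j" using inY_le_M by (auto simp: inY_iff)
    show ?thesis
    proof (cases "j = M")
      case True
      then have ih: "i \<le> h" using Y inY_M by simp
      consider "i < a" | "i = a" | "a < i" by linarith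
      then show ?thesis
      proof cases
        case 1 then show ?thesis using F4b jM Y True p by (simp add: tinc_app)
      next
        case 2 then show ?thesis using F4a jM Y True p by (simp add: tinc_app)
      next
        case 3 then show ?thesis using F5 ih Y True p by (simp add: tinc_app)
      qed
    next
      case False
      then have jM': "j < M" using jM by simp
      show ?thesis
      proof (cases "a < i \<and> i \<le> h")
        case True then show ?thesis using F2 jM jM' Y p by (simp add: tinc_app)
      next
        case F2: False
        then have "i \<le> a \<or> h < i" by auto
        then have pp: "phi a d (psi a d i) = i" by (rule phi_psi)
        have "tinc k lam M h a d (tdec M a d T) (i, j) = tdec M a d T (psi a d i, j)"
          using F2 jM' Y by (auto simp: tinc_app)
        also have "\<dots> = T (i, j)" using pp jM' by (simp add: tdec_app)
        finally show ?thesis using p by simp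
      qed
    qed
  qed
qed

end

context
  fixes T' :: "nat \<times> nat \<Rightarrow> cell" and n :: nat
  assumes T': "T' \<in> catalan_tableaux n (k - d) (lamA M a d lam)"
begin

lemma tdec_tinc: "tdec M a d (tinc k lam M h a d T') = T'"
proof (rule ext)
  fix p
  obtain i j :: nat where p: "p = (i, j)" by force
  show "tdec M a d (tinc k lam M h a d T') p = T' p"
  proof (cases "M \<le> j")
    case True
    then have "\<not> in_Y (k - d) (lamA M a d lam) (i, j)" using inY' by simp
    then show ?thesis using tab_out[OF T'] True p by (simp add: tdec_app)
  next
    case False
    have po: "(a < phi a d i \<and> phi a d i \<le> h) = False" using phi_out[of i] by auto
    show ?thesis
    proof (cases "in_Y k lam (phi a d i, j)")
      case True
      then show ?thesis using False po p by (auto simp: tdec_app tinc_app psi_phi)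
    next
      case nY: False
      then have "\<not> in_Y (k - d) (lamA M a d lam) (i, j)" using inY' by simp
      then show ?thesis using tab_out[OF T'] nY False p by (simp add: tdec_app tinc_app)
    qed
  qed
qed

lemma tinc_M: "in_Y k lam (i, M) \<Longrightarrow> tinc k lam M h a d T' (i, M) = (if i < a then Emp else if i = a then Alpha else Beta)"
  by (simp add: tinc_app)

lemma tinc_mid: "in_Y k lam (i, j) \<Longrightarrow> j \<noteq> M \<Longrightarrow> a < i \<Longrightarrow> i \<le> h \<Longrightarrow> tinc k lam M h a d T' (i, j) = Emp"
  by (simp add: tinc_app)

lemma tinc_oth: "in_Y k lam (i, j) \<Longrightarrow> j \<noteq> M \<Longrightarrow> i \<le> a \<or> h < i \<Longrightarrow> tinc k lam M h a d T' (i, j) = T' (psi a d i, j)"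
  by (auto simp: tinc_app)

lemma tinc_in: "tinc k lam M h a d T' \<in> catalan_tableaux n k lam"
proof (rule tabI)
  let ?T = "tinc k lam M h a d T'"
  show "?T b = Emp" if "\<not> in_Y k lam b" for b
    using that by (simp add: tinc_def)
  show "?T (i', j) = Emp" if Y: "in_Y k lam (i, j)" and A: "?T (i, j) = Alpha"
    and Y': "in_Y k lam (i', j)" and ii: "i' < i" for i j i'
  proof (cases "j = M")
    case True
    have "(if i < a then Emp else if i = a then Alpha else Beta) = Alpha"
      using A Y True tinc_M by simp
    then have "i = a" by (simp split: if_splits)
    then have "i' < a" using ii by simp
    then show ?thesis using Y' True tinc_M by simp
  next
    case False
    have jM: "j < M" using False inY_le_M[OF Y] by simp
    have nm: "i \<le> a \<or> h < i"
    proof (rule ccontr)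
      assume "\<not> (i \<le> a \<or> h < i)"
      then have "?T (i, j) = Emp" using tinc_mid[OF Y False] by simp
      then show False using A by simp
    qed
    have A': "T' (psi a d i, j) = Alpha" using A tinc_oth[OF Y False nm] by simp
    show ?thesis
    proof (cases "i' \<le> a \<or> h < i'")
      case False then show ?thesis using tinc_mid[OF Y' \<open>j \<noteq> M\<close>] by simp
    next
      case nm': True
      have pp: "phi a d (psi a d i) = i" "phi a d (psi a d i') = i'" using phi_psi nm nm' by auto
      have y1: "in_Y (k - d) (lamA M a d lam) (psi a d i, j)" using inY' pp jM Y by simp
      have y2: "in_Y (k - d) (lamA M a d lam) (psi a d i', j)" using inY' pp jM Y' by simp
      have "phi a d (psi a d i') < phi a d (psi a d i)" using pp ii by simp
      then have "psi a d i' < psi a d i" by (rule phi_mono[THEN iffD1])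
      then have "T' (psi a d i', j) = Emp" using tab_col[OF T' y1 A' y2] by simp
      then show ?thesis using tinc_oth[OF Y' False nm'] by simp
    qed
  qed
  show "?T (i, j') = Emp" if Y: "in_Y k lam (i, j)" and B: "?T (i, j) = Beta"
    and Y': "in_Y k lam (i, j')" and jj: "j' < j" for i j j'
  proof (cases "j = M")
    case True
    have "(if i < a then Emp else if i = a then Alpha else Beta) = Beta"
      using B Y True tinc_M by simp
    then have "a < i" by (simp split: if_splits)
    moreover have "i \<le> h" using Y True inY_M by simp
    moreover have "j' \<noteq> M" using jj True by simp
    ultimately show ?thesis using tinc_mid[OF Y'] by simp
  next
    case False
    have jM: "j < M" using False inY_le_M[OF Y] by simp
    have nm: "i \<le> a \<or> h < i"
    proof (rule ccontr)
      assume "\<not> (i \<le> a \<or> h < i)"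
      then have "?T (i, j) = Emp" using tinc_mid[OF Y False] by simp
      then show False using B by simp
    qed
    have B': "T' (psi a d i, j) = Beta" using B tinc_oth[OF Y False nm] by simp
    have pp: "phi a d (psi a d i) = i" using phi_psi nm by auto
    have y1: "in_Y (k - d) (lamA M a d lam) (psi a d i, j)" using inY' pp jM Y by simp
    have y2: "in_Y (k - d) (lamA M a d lam) (psi a d i, j')" using inY' pp jM jj Y' by simp
    have "T' (psi a d i, j') = Emp" using tab_row[OF T' y1 B' y2 jj] .
    moreover have "j' \<noteq> M" using jj jM by simp
    ultimately show ?thesis using tinc_oth[OF Y' _ nm] by simp
  qed
  show "?T (i, j) \<noteq> Emp" if Y: "in_Y k lam (i, j)"
    and nA: "\<And>i'. i < i' \<Longrightarrow> in_Y k lam (i', j) \<Longrightarrow> ?T (i', j) \<noteq> Alpha"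
    and nB: "\<And>j'. j < j' \<Longrightarrow> in_Y k lam (i, j') \<Longrightarrow> ?T (i, j') \<noteq> Beta" for i j
  proof (cases "j = M")
    case jM: True
    show ?thesis
    proof (cases "i < a")
      case True
      have "1 \<le> a \<and> a \<le> h" using Y True ad by (auto simp: inY_iff)
      then have aY: "in_Y k lam (a, M)" using inY_M by blast
      then have "?T (a, M) = Alpha" using tinc_M by simp
      then show ?thesis using nA[OF True] aY jM by simp
    next
      case False then show ?thesis using Y jM tinc_M by simp
    qed
  next
    case False
    have jM: "j < M" using False inY_le_M[OF Y] by simp
    show ?thesis
    proof (cases "i \<le> a \<or> h < i")
      case False
      then have "1 \<le> i \<and> i \<le> h" by auto
      then have iY: "in_Y k lam (i, M)" using inY_M by blast
      then have "?T (i, M) = Beta" using tinc_M False by simp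
      then show ?thesis using nB[OF jM iY] by simp
    next
      case nm: True
      have pp: "phi a d (psi a d i) = i" using phi_psi nm by auto
      have y1: "in_Y (k - d) (lamA M a d lam) (psi a d i, j)" using inY' pp jM Y by simp
      have "T' (psi a d i, j) \<noteq> Emp"
      proof (rule tab_fill[OF T' y1])
        fix i'' assume i'': "psi a d i < i''" "in_Y (k - d) (lamA M a d lam) (i'', j)"
        have y: "in_Y k lam (phi a d i'', j)" using i''(2) inY' by simp
        have "phi a d (psi a d i) < phi a d i''" using i''(1) by (rule phi_mono[THEN iffD2])
        then have "i < phi a d i''" using pp by simp
        then have "?T (phi a d i'', j) \<noteq> Alpha" using nA y by blast
        moreover have "phi a d i'' \<le> a \<or> h < phi a d i''" using phi_out[of i''] by auto
        ultimately show "T' (i'', j) \<noteq> Alpha" using tinc_oth[OF y False] psi_phi by simp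
      next
        fix j'' assume j'': "j < j''" "in_Y (k - d) (lamA M a d lam) (psi a d i, j'')"
        have y: "in_Y k lam (i, j'')" "j'' < M" using j''(2) inY' pp by auto
        then have "?T (i, j'') \<noteq> Beta" using nB j'' by blast
        then show "T' (psi a d i, j'') \<noteq> Beta" using tinc_oth[OF y(1) _ nm] y(2) by simp
      qed
      then show ?thesis using tinc_oth[OF Y False nm] by simp
    qed
  qed
qed

lemma tinc_idx: "tidx h M (tinc k lam M h a d T') = a"
proof -
  have "{i\<in>{1..h}. tinc k lam M h a d T' (i, M) \<noteq> Beta} = {1..a}"
  proof (rule set_eqI)
    fix i
    show "i \<in> {i\<in>{1..h}. tinc k lam M h a d T' (i, M) \<noteq> Beta} \<longleftrightarrow> i \<in> {1..a}"
    proof (cases "1 \<le> i \<and> i \<le> h")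
      case True
      then have "in_Y k lam (i, M)" using inY_M by blast
      then have "tinc k lam M h a d T' (i, M) = (if i < a then Emp else if i = a then Alpha else Beta)"
        by (rule tinc_M)
      then show ?thesis using True by auto
    next
      case False then show ?thesis using ad by auto
    qed
  qed
  then show ?thesis by (simp add: tidx_def)
qed

lemma tinc_nE: "tinc k lam M h a d T' (i, j) \<noteq> Emp \<Longrightarrow> in_Y k lam (i, j)"
  by (auto simp: tinc_app split: if_splits)

lemma T'_nE: "T' (i, j) \<noteq> Emp \<Longrightarrow> j < M \<and> in_Y k lam (phi a d i, j)"
  using tab_out[OF T', of "(i, j)"] inY' by blast

lemma tinc_phi: "j < M \<Longrightarrow> in_Y k lam (phi a d i, j) \<Longrightarrow> tinc k lam M h a d T' (phi a d i, j) = T' (i, j)"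
  using tinc_oth[of "phi a d i" j] phi_out[of i] psi_phi by simp

lemma rowB: "(\<exists>j\<in>{1..m}. tinc k lam M h a d T' (phi a d i, j) = Beta) \<longleftrightarrow> (\<exists>j\<in>{1..m - 1}. T' (i, j) = Beta)"
proof
  assume "\<exists>j\<in>{1..m}. tinc k lam M h a d T' (phi a d i, j) = Beta"
  then obtain j where j: "j \<in> {1..m}" "tinc k lam M h a d T' (phi a d i, j) = Beta" by blast
  have Y: "in_Y k lam (phi a d i, j)" using tinc_nE j(2) by simp
  have "j \<noteq> M"
  proof
    assume jM: "j = M"
    then have "1 \<le> phi a d i \<and> phi a d i \<le> h" using Y inY_M by simp
    then have "phi a d i \<le> a" using phi_out[of i] by auto
    then show False using j(2) jM tinc_M[of "phi a d i"] Y by (auto split: if_splits)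
  qed
  then have jM: "j < M" using inY_le_M[OF Y] by simp
  then have "T' (i, j) = Beta" using tinc_phi Y j(2) by simp
  moreover have "j \<in> {1..m - 1}" using j jM Mm by auto
  ultimately show "\<exists>j\<in>{1..m - 1}. T' (i, j) = Beta" by blast
next
  assume "\<exists>j\<in>{1..m - 1}. T' (i, j) = Beta"
  then obtain j where j: "j \<in> {1..m - 1}" "T' (i, j) = Beta" by blast
  then have "T' (i, j) \<noteq> Emp" by simp
  then have "j < M \<and> in_Y k lam (phi a d i, j)" by (rule T'_nE)
  then have "tinc k lam M h a d T' (phi a d i, j) = Beta" using tinc_phi j by simp
  moreover have "j \<in> {1..m}" using j by auto
  ultimately show "\<exists>j\<in>{1..m}. tinc k lam M h a d T' (phi a d i, j) = Beta" by blast
qed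

lemma Rst_tinc: "Rst k m (tinc k lam M h a d T') = Rst (k - d) (m - 1) T'"
proof -
  let ?T = "tinc k lam M h a d T'"
  let ?R = "{i\<in>{1..k}. \<not> (\<exists>j\<in>{1..m}. ?T (i, j) = Beta)}"
  let ?R' = "{i\<in>{1..k - d}. \<not> (\<exists>j\<in>{1..m - 1}. T' (i, j) = Beta)}"
  have "?R = phi a d ` ?R'"
  proof
    show "?R \<subseteq> phi a d ` ?R'"
    proof
      fix i assume i: "i \<in> ?R"
      have nm: "i \<le> a \<or> h < i"
      proof (rule ccontr)
        assume "\<not> (i \<le> a \<or> h < i)"
        then have iY: "in_Y k lam (i, M)" using inY_M by auto
        then have "?T (i, M) = Beta" using tinc_M[of i] \<open>\<not> (i \<le> a \<or> h < i)\<close> by auto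
        moreover have "M \<in> {1..m}" using M1 Mm by simp
        ultimately show False using i by blast
      qed
      have pp: "phi a d (psi a d i) = i" using phi_psi nm by simp
      have "psi a d i \<in> {1..k - d}" using psi_range nm i by simp
      moreover have "\<not> (\<exists>j\<in>{1..m - 1}. T' (psi a d i, j) = Beta)"
        using rowB[of "psi a d i"] pp i by simp
      ultimately show "i \<in> phi a d ` ?R'" using pp by force
    qed
    show "phi a d ` ?R' \<subseteq> ?R"
    proof
      fix i assume "i \<in> phi a d ` ?R'"
      then obtain i' where i': "i' \<in> ?R'" "i = phi a d i'" by blast
      then have "i \<in> {1..k}" using phi_range by simp
      then show "i \<in> ?R" using rowB[of i'] i' by simp
    qed
  qed
  moreover have "inj_on (phi a d) ?R'"
    by (rule inj_on_inverseI[where g = "psi a d"]) (rule psi_phi)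
  ultimately show ?thesis unfolding Rst_def by (simp add: card_image)
qed

lemma colA: assumes jM: "j < M" shows "(\<exists>i\<in>{1..k}. tinc k lam M h a d T' (i, j) = Alpha) \<longleftrightarrow> (\<exists>i\<in>{1..k - d}. T' (i, j) = Alpha)"
proof
  assume "\<exists>i\<in>{1..k}. tinc k lam M h a d T' (i, j) = Alpha"
  then obtain i where i: "i \<in> {1..k}" "tinc k lam M h a d T' (i, j) = Alpha" by blast
  have Y: "in_Y k lam (i, j)" using tinc_nE i(2) by simp
  have jn: "j \<noteq> M" using jM by simp
  have nm: "i \<le> a \<or> h < i"
  proof (rule ccontr)
    assume "\<not> (i \<le> a \<or> h < i)"
    then have "tinc k lam M h a d T' (i, j) = Emp" using tinc_mid[OF Y jn] by simp
    then show False using i by simp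
  qed
  have "T' (psi a d i, j) = Alpha" using tinc_oth[OF Y jn nm] i by simp
  moreover have "psi a d i \<in> {1..k - d}" using psi_range nm i by simp
  ultimately show "\<exists>i\<in>{1..k - d}. T' (i, j) = Alpha" by blast
next
  assume "\<exists>i\<in>{1..k - d}. T' (i, j) = Alpha"
  then obtain i where i: "i \<in> {1..k - d}" "T' (i, j) = Alpha" by blast
  then have "T' (i, j) \<noteq> Emp" by simp
  then have "j < M \<and> in_Y k lam (phi a d i, j)" by (rule T'_nE)
  then have "tinc k lam M h a d T' (phi a d i, j) = Alpha" using tinc_phi i by simp
  moreover have "phi a d i \<in> {1..k}" using phi_range i by simp
  ultimately show "\<exists>i\<in>{1..k}. tinc k lam M h a d T' (i, j) = Alpha" by blast
qed

lemma Ast_tinc: "Ast k m (tinc k lam M h a d T') = Ast (k - d) (m - 1) T' + (if a = 0 then 1 else 0)"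
proof -
  let ?T = "tinc k lam M h a d T'"
  define W where "W = {j\<in>{1..m}. \<not> (\<exists>i\<in>{1..k}. ?T (i, j) = Alpha)}"
  define W' where "W' = {j\<in>{1..m - 1}. \<not> (\<exists>i\<in>{1..k - d}. T' (i, j) = Alpha)}"
  have gt: "{M<..m} \<subseteq> W"
  proof
    fix j assume j: "j \<in> {M<..m}"
    have "?T (i, j) \<noteq> Alpha" for i
    proof
      assume "?T (i, j) = Alpha"
      then have "in_Y k lam (i, j)" using tinc_nE by simp
      then show False using inY_le_M j by fastforce
    qed
    then show "j \<in> W" using j W_def by auto
  qed
  have gt': "{M - 1<..m - 1} \<subseteq> W'"
  proof
    fix j assume j: "j \<in> {M - 1<..m - 1}"
    have "T' (i, j) \<noteq> Alpha" for i using T'_nE[of i j] j by auto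
    then show "j \<in> W'" using j W'_def by auto
  qed
  have Mw: "(M \<in> W) = (a = 0)"
  proof
    assume MW: "M \<in> W"
    show "a = 0"
    proof (rule ccontr)
      assume "a \<noteq> 0"
      then have "1 \<le> a \<and> a \<le> h" using ad by auto
      then have aY: "in_Y k lam (a, M)" using inY_M by blast
      then have "?T (a, M) = Alpha" using tinc_M by simp
      moreover have "a \<in> {1..k}" using aY by (simp add: inY_iff)
      ultimately show False using MW W_def by blast
    qed
  next
    assume a0: "a = 0"
    have "?T (i, M) \<noteq> Alpha" for i
    proof
      assume A: "?T (i, M) = Alpha"
      then have Y: "in_Y k lam (i, M)" using tinc_nE by simp
      then have "i \<ge> 1" by (simp add: inY_iff)
      then show False using A tinc_M[OF Y] a0 by simp
    qed
    then show "M \<in> W" using M1 Mm W_def by auto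
  qed
  have lt: "j \<in> W \<longleftrightarrow> j \<in> W'" if "j < M" for j
    using colA[OF that] that Mm unfolding W_def W'_def by auto
  have c1: "card W = card (W \<inter> {..<M}) + card (W \<inter> {M}) + (m - M)"
    by (rule card3[OF dec M1 Mm h1 hk top low ad]) (use gt in \<open>auto simp: W_def\<close>)
  have W'sub: "W' \<subseteq> {1..m - 1}" by (auto simp: W'_def)
  have c2: "card W' = card (W' \<inter> {..<M}) + (m - M)"
  proof -
    have e: "W' = (W' \<inter> {..<M}) \<union> {M - 1<..m - 1}" using gt' W'sub M1 by auto
    have "card W' = card (W' \<inter> {..<M}) + card {M - 1<..m - 1}"
      by (subst e, rule card_Un_disjoint) auto
    then show ?thesis using M1 Mm by simp
  qed
  have e3: "W \<inter> {..<M} = W' \<inter> {..<M}" using lt by auto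
  have e4: "card (W \<inter> {M}) = (if a = 0 then 1 else 0)" using Mw
    by (cases "a = 0") (auto simp: Int_insert_right)
  have "Ast k m ?T = card W" by (simp add: Ast_def W_def)
  moreover have "Ast (k - d) (m - 1) T' = card W'" by (simp add: Ast_def W'_def)
  ultimately show ?thesis using c1 c2 e3 e4 by simp
qed

end

lemma bij_tab:
  "bij_betw (tinc k lam M h a d) (catalan_tableaux n (k - d) (lamA M a d lam)) {T\<in>catalan_tableaux n k lam. tidx h M T = a}"
proof (rule bij_betw_byWitness[where f' = "tdec M a d"])
  show "\<forall>T\<in>catalan_tableaux n (k - d) (lamA M a d lam). tdec M a d (tinc k lam M h a d T) = T"
    using tdec_tinc by auto
  show "\<forall>T\<in>{T\<in>catalan_tableaux n k lam. tidx h M T = a}. tinc k lam M h a d (tdec M a d T) = T"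
    using tinc_tdec by auto
  show "tinc k lam M h a d ` catalan_tableaux n (k - d) (lamA M a d lam) \<subseteq> {T\<in>catalan_tableaux n k lam. tidx h M T = a}"
  proof
    fix T assume "T \<in> tinc k lam M h a d ` catalan_tableaux n (k - d) (lamA M a d lam)"
    then obtain T' where "T' \<in> catalan_tableaux n (k - d) (lamA M a d lam)" "T = tinc k lam M h a d T'" by blast
    then show "T \<in> {T\<in>catalan_tableaux n k lam. tidx h M T = a}" using tinc_in tinc_idx by simp
  qed
  show "tdec M a d ` {T\<in>catalan_tableaux n k lam. tidx h M T = a} \<subseteq> catalan_tableaux n (k - d) (lamA M a d lam)"
  proof
    fix T' assume "T' \<in> tdec M a d ` {T\<in>catalan_tableaux n k lam. tidx h M T = a}"
    then obtain T where "T \<in> catalan_tableaux n k lam" "tidx h M T = a" "T' = tdec M a d T" by blast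
    then show "T' \<in> catalan_tableaux n (k - d) (lamA M a d lam)" using tdec_in by simp
  qed
qed

end
end



lemma glue:
  assumes "\<forall>x\<in>A. ia x \<in> I" "\<forall>y\<in>B. ib y \<in> I"
    and "\<forall>i\<in>I. bij_betw (g i) {x\<in>A. ia x = i} {y\<in>B. ib y = i}"
  shows "bij_betw (\<lambda>x. g (ia x) x) A B"
  unfolding bij_betw_def
proof
  show "inj_on (\<lambda>x. g (ia x) x) A"
  proof (rule inj_onI)
    fix x y assume x: "x \<in> A" and y: "y \<in> A" and e: "g (ia x) x = g (ia y) y"
    have bx: "bij_betw (g (ia x)) {z\<in>A. ia z = ia x} {w\<in>B. ib w = ia x}" using assms x by blast
    have by': "bij_betw (g (ia y)) {z\<in>A. ia z = ia y} {w\<in>B. ib w = ia y}" using assms y by blast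
    have "g (ia x) x \<in> {w\<in>B. ib w = ia x}" using bij_betw_apply[OF bx] x by simp
    moreover have "g (ia y) y \<in> {w\<in>B. ib w = ia y}" using bij_betw_apply[OF by'] y by simp
    ultimately have iae: "ia x = ia y" using e by simp
    then have "g (ia x) x = g (ia x) y" using e by simp
    moreover have "inj_on (g (ia x)) {z\<in>A. ia z = ia x}" using bx bij_betw_def by blast
    ultimately show "x = y" using x y iae by (auto dest: inj_onD)
  qed
  show "(\<lambda>x. g (ia x) x) ` A = B"
  proof
    show "(\<lambda>x. g (ia x) x) ` A \<subseteq> B"
    proof
      fix w assume "w \<in> (\<lambda>x. g (ia x) x) ` A"
      then obtain x where x: "x \<in> A" "w = g (ia x) x" by blast
      have bx: "bij_betw (g (ia x)) {z\<in>A. ia z = ia x} {w\<in>B. ib w = ia x}" using assms x by blast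
      show "w \<in> B" using bij_betw_apply[OF bx] x by simp
    qed
    show "B \<subseteq> (\<lambda>x. g (ia x) x) ` A"
    proof
      fix w assume w: "w \<in> B"
      have bw: "bij_betw (g (ib w)) {z\<in>A. ia z = ib w} {v\<in>B. ib v = ib w}" using assms w by blast
      then have "w \<in> g (ib w) ` {z\<in>A. ia z = ib w}" using w by (simp add: bij_betw_def)
      then obtain x where "x \<in> A" "ia x = ib w" "w = g (ib w) x" by blast
      then show "w \<in> (\<lambda>x. g (ia x) x) ` A" by force
    qed
  qed
qed

lemma base:
  assumes z: "\<forall>i\<in>{1..k}. lam i = 0"
  shows "\<exists>f. bij_betw f (catalan_paths 0 k lam) (catalan_tableaux 0 k lam) \<and>
    (\<forall>C\<in>catalan_paths 0 k lam. path_south_border k C = Rst k m (f C) \<and> Wst k m lam C = Ast k m (f C))"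
proof -
  have P: "catalan_paths 0 k lam = {\<lambda>_. 0}"
  proof
    show "catalan_paths 0 k lam \<subseteq> {\<lambda>_. 0}"
    proof
      fix C assume "C \<in> catalan_paths 0 k lam"
      then have "C i = 0" for i using z unfolding catalan_paths_def by (cases "i \<in> {1..k}") fastforce+
      then show "C \<in> {\<lambda>_. 0}" by auto
    qed
    show "{\<lambda>_. 0} \<subseteq> catalan_paths 0 k lam" by (auto simp: catalan_paths_def)
  qed
  have nY: "\<not> in_Y k lam b" for b using z by (auto simp: in_Y_def)
  have T: "catalan_tableaux 0 k lam = {\<lambda>_. Emp}"
  proof
    show "catalan_tableaux 0 k lam \<subseteq> {\<lambda>_. Emp}"
    proof
      fix T assume "T \<in> catalan_tableaux 0 k lam"
      then have "T b = Emp" for b using tab_out nY by blast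
      then show "T \<in> {\<lambda>_. Emp}" by auto
    qed
    show "{\<lambda>_. Emp} \<subseteq> catalan_tableaux 0 k lam" by (auto simp: catalan_tableaux_def nY)
  qed
  have "{i\<in>{1..k}. (\<lambda>_. 0::nat) i = 0} = {1..k}" by auto
  then have s1: "path_south_border k (\<lambda>_. 0) = k" by (simp add: path_south_border_def)
  have "{i\<in>{1..k}. \<not> (\<exists>j\<in>{1..m}. (\<lambda>_::nat\<times>nat. Emp) (i, j) = Beta)} = {1..k}" by auto
  then have s2: "Rst k m (\<lambda>_. Emp) = k" unfolding Rst_def by simp
  have w1: "Wst k m lam (\<lambda>_. 0) = m"
  proof -
    have "{x\<in>{1..m}. \<forall>i\<in>{1..k}. x \<le> lam i \<longrightarrow> x \<le> (0::nat)} = {1..m}" using z by auto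
    then show ?thesis by (simp add: Wst_def)
  qed
  have "{j\<in>{1..m}. \<not> (\<exists>i\<in>{1..k}. (\<lambda>_::nat\<times>nat. Emp) (i, j) = Alpha)} = {1..m}" by auto
  then have w2: "Ast k m (\<lambda>_. Emp) = m" unfolding Ast_def by simp
  have "bij_betw (\<lambda>_. \<lambda>_. Emp) {\<lambda>_. 0::nat} {\<lambda>_::nat\<times>nat. Emp}" by (simp add: bij_betw_def)
  then show ?thesis using P T s1 s2 w1 w2 by auto
qed


lemma main:
  assumes "ys k m lam"
  shows "\<exists>f. bij_betw f (catalan_paths 0 k lam) (catalan_tableaux 0 k lam) \<and>
    (\<forall>C\<in>catalan_paths 0 k lam. path_south_border k C = Rst k m (f C) \<and> Wst k m lam C = Ast k m (f C))"
  using assms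
proof (induction m arbitrary: k lam)
  case 0
  then have "\<forall>i\<in>{1..k}. lam i = 0" by (auto simp: ys_def)
  then show ?case by (rule base)
next
  case (Suc m0)
  have dec: "\<forall>i\<in>{1..<k}. lam (Suc i) \<le> lam i" and bnd: "\<forall>i\<in>{1..k}. lam i \<le> Suc m0"
    using Suc.prems by (auto simp: ys_def)
  show ?case
  proof (cases "\<forall>i\<in>{1..k}. lam i = 0")
    case True then show ?thesis by (rule base)
  next
    case False
    then obtain i0 where i0: "i0 \<in> {1..k}" "lam i0 \<noteq> 0" by blast
    define M where "M = lam 1"
    have k1: "1 \<le> k" using i0 by simp
    have "lam i0 \<le> lam 1" using mono_seq[OF dec, of 1 i0] i0 by simp
    then have M1: "1 \<le> M" using i0 M_def by simp
    have Mm: "M \<le> Suc m0" using bnd k1 M_def by simp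
    define H where "H = {i\<in>{1..k}. lam i = M}"
    define h where "h = Max H"
    have finH: "finite H" by (simp add: H_def)
    have oneH: "1 \<in> H" using k1 M_def H_def by simp
    have hH: "h \<in> H" using Max_in[OF finH] oneH h_def by blast
    have h1: "1 \<le> h" using Max_ge[OF finH oneH] h_def by simp
    have hk: "h \<le> k" using hH H_def by simp
    have lh: "lam h = M" using hH H_def by simp
    have top: "\<forall>i\<in>{1..h}. lam i = M"
    proof
      fix i assume i: "i \<in> {1..h}"
      have "lam h \<le> lam i" using mono_seq[OF dec, of i h] i hk by simp
      moreover have "lam i \<le> lam 1" using mono_seq[OF dec, of 1 i] i hk by simp
      ultimately show "lam i = M" using lh M_def by simp
    qed
    have low: "\<forall>i. h < i \<and> i \<le> k \<longrightarrow> lam i < M"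
    proof (intro allI impI)
      fix i assume i: "h < i \<and> i \<le> k"
      have "lam i \<le> lam h" using mono_seq[OF dec, of h i] i h1 by simp
      moreover have "lam i \<noteq> M"
      proof
        assume "lam i = M"
        then have "i \<in> H" using i h1 H_def by simp
        then have "i \<le> h" using Max_ge[OF finH] h_def by simp
        then show False using i by simp
      qed
      ultimately show "lam i < M" using lh by simp
    qed
    note ctx = dec M1 Mm h1 hk top low
    have IH: "\<forall>a\<in>{0..h}. \<exists>f. bij_betw f (catalan_paths 0 (k - (h - a)) (lamA M a (h - a) lam))
                                    (catalan_tableaux 0 (k - (h - a)) (lamA M a (h - a) lam)) \<and>
       (\<forall>C\<in>catalan_paths 0 (k - (h - a)) (lamA M a (h - a) lam).
          path_south_border (k - (h - a)) C = Rst (k - (h - a)) m0 (f C) \<and>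
          Wst (k - (h - a)) m0 (lamA M a (h - a) lam) C = Ast (k - (h - a)) m0 (f C))"
    proof
      fix a assume a: "a \<in> {0..h}"
      have ad: "a + (h - a) = h" using a by simp
      have "ys (k - (h - a)) m0 (lamA M a (h - a) lam)"
        unfolding ys_def
      proof
        show "\<forall>i\<in>{1..k - (h - a)}. lamA M a (h - a) lam i \<le> m0"
          using lamA_le[OF ctx ad] Mm by fastforce
        show "\<forall>i\<in>{1..<k - (h - a)}. lamA M a (h - a) lam (Suc i) \<le> lamA M a (h - a) lam i"
          by (rule ys_lamA[OF ctx ad])
      qed
      then show "\<exists>f. bij_betw f (catalan_paths 0 (k - (h - a)) (lamA M a (h - a) lam))
                                    (catalan_tableaux 0 (k - (h - a)) (lamA M a (h - a) lam)) \<and>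
       (\<forall>C\<in>catalan_paths 0 (k - (h - a)) (lamA M a (h - a) lam).
          path_south_border (k - (h - a)) C = Rst (k - (h - a)) m0 (f C) \<and>
          Wst (k - (h - a)) m0 (lamA M a (h - a) lam) C = Ast (k - (h - a)) m0 (f C))"
        by (rule Suc.IH)
    qed
    then obtain F where F: "\<forall>a\<in>{0..h}. bij_betw (F a) (catalan_paths 0 (k - (h - a)) (lamA M a (h - a) lam))
                                    (catalan_tableaux 0 (k - (h - a)) (lamA M a (h - a) lam)) \<and>
       (\<forall>C\<in>catalan_paths 0 (k - (h - a)) (lamA M a (h - a) lam).
          path_south_border (k - (h - a)) C = Rst (k - (h - a)) m0 (F a C) \<and>
          Wst (k - (h - a)) m0 (lamA M a (h - a) lam) C = Ast (k - (h - a)) m0 (F a C))"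
      using bchoice[OF IH] by (elim exE) blast
    define g where "g a = tinc k lam M h a (h - a) \<circ> (F a \<circ> pdec k (h - a))" for a
    define f where "f C = g (pidx h M C) C" for C
    have gb: "bij_betw (g a) {C\<in>catalan_paths 0 k lam. pidx h M C = a} {T\<in>catalan_tableaux 0 k lam. tidx h M T = a}"
      if a: "a \<in> {0..h}" for a
    proof -
      have ad: "a + (h - a) = h" using a by simp
      have b1: "bij_betw (pdec k (h - a)) {C\<in>catalan_paths 0 k lam. pidx h M C = a} (catalan_paths 0 (k - (h - a)) (lamA M a (h - a) lam))"
        by (rule bij_path[OF ctx ad])
      have b2: "bij_betw (F a) (catalan_paths 0 (k - (h - a)) (lamA M a (h - a) lam))
                                    (catalan_tableaux 0 (k - (h - a)) (lamA M a (h - a) lam))"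
        using bspec[OF F a] by (rule conjunct1)
      have b3: "bij_betw (tinc k lam M h a (h - a)) (catalan_tableaux 0 (k - (h - a)) (lamA M a (h - a) lam)) {T\<in>catalan_tableaux 0 k lam. tidx h M T = a}"
        by (rule bij_tab[OF ctx ad])
      show ?thesis unfolding g_def
        by (rule bij_betw_trans[OF bij_betw_trans[OF b1 b2] b3])
    qed
    have fb: "bij_betw f (catalan_paths 0 k lam) (catalan_tableaux 0 k lam)"
      unfolding f_def
    proof (rule glue[where I = "{0..h}" and ib = "tidx h M"])
      show "\<forall>x\<in>catalan_paths 0 k lam. pidx h M x \<in> {0..h}" using path_SP(2)[OF ctx] by simp
      show "\<forall>y\<in>catalan_tableaux 0 k lam. tidx h M y \<in> {0..h}" using tab_SP(2)[OF ctx] by simp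
      show "\<forall>a\<in>{0..h}. bij_betw (g a) {x \<in> catalan_paths 0 k lam. pidx h M x = a} {y \<in> catalan_tableaux 0 k lam. tidx h M y = a}"
        using gb by blast
    qed
    have fs: "path_south_border k C = Rst k (Suc m0) (f C) \<and> Wst k (Suc m0) lam C = Ast k (Suc m0) (f C)"
      if C: "C \<in> catalan_paths 0 k lam" for C
    proof -
      define a where "a = pidx h M C"
      have a: "a \<in> {0..h}" using path_SP(2)[OF ctx C] a_def by simp
      have ad: "a + (h - a) = h" using a by simp
      define C' where "C' = pdec k (h - a) C"
      have C': "C' \<in> catalan_paths 0 (k - (h - a)) (lamA M a (h - a) lam)"
        using pdec_in[OF ctx ad C] a_def C'_def by simp
      have CC: "C = pinc k M (h - a) C'" using pinc_pdec[OF ctx ad C] a_def C'_def by simp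
      note Fa = bspec[OF F a]
      have FC: "F a C' \<in> catalan_tableaux 0 (k - (h - a)) (lamA M a (h - a) lam)"
        using bij_betw_apply[OF conjunct1[OF Fa] C'] .
      have st: "path_south_border (k - (h - a)) C' = Rst (k - (h - a)) m0 (F a C')"
               "Wst (k - (h - a)) m0 (lamA M a (h - a) lam) C' = Ast (k - (h - a)) m0 (F a C')"
        using bspec[OF conjunct2[OF Fa] C'] by auto
      have fC: "f C = tinc k lam M h a (h - a) (F a C')" by (simp add: f_def g_def a_def C'_def)
      have "path_south_border k C = path_south_border (k - (h - a)) C'"
        using south_pinc[OF ctx ad C'] CC by simp
      also have "\<dots> = Rst (k - (h - a)) m0 (F a C')" using st by simp
      also have "\<dots> = Rst k (Suc m0) (f C)" using Rst_tinc[OF ctx ad FC] fC by simp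
      finally have s1: "path_south_border k C = Rst k (Suc m0) (f C)" .
      have "Wst k (Suc m0) lam C = Wst (k - (h - a)) m0 (lamA M a (h - a) lam) C' + (if a = 0 then 1 else 0)"
        using west_pinc[OF ctx ad C'] CC by simp
      also have "\<dots> = Ast (k - (h - a)) m0 (F a C') + (if a = 0 then 1 else 0)" using st by simp
      also have "\<dots> = Ast k (Suc m0) (f C)" using Ast_tinc[OF ctx ad FC] fC by simp
      finally show ?thesis using s1 by simp
    qed
    show ?thesis by (rule exI[of _ f]) (use fb fs in auto)
  qed
qed




theorem lemma1:
  fixes n k :: nat and lam :: "nat \<Rightarrow> nat"
  assumes "1 \<le> k" and "k \<le> n" and "young_shape n k lam"
  shows "\<exists>f. bij_betw f (catalan_paths n k lam) (catalan_tableaux n k lam) \<and>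
           (\<forall>C\<in>catalan_paths n k lam. \<forall>\<alpha> \<beta> :: real. \<alpha> \<noteq> 0 \<longrightarrow> \<beta> \<noteq> 0 \<longrightarrow>
              path_wt n k lam \<alpha> \<beta> C = tab_wt n k \<alpha> \<beta> (f C))"
proof -
  have Y: "ys k (n - k) lam" using assms(3) by (simp add: ys_def young_shape_def)
  have P: "catalan_paths n k lam = catalan_paths 0 k lam" by (simp add: catalan_paths_def)
  have T: "catalan_tableaux n k lam = catalan_tableaux 0 k lam" by (simp add: catalan_tableaux_def)
  obtain f where fb: "bij_betw f (catalan_paths 0 k lam) (catalan_tableaux 0 k lam)"
    and fs: "\<forall>C\<in>catalan_paths 0 k lam. path_south_border k C = Rst k (n - k) (f C) \<and> Wst k (n - k) lam C = Ast k (n - k) (f C)"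
    using main[OF Y] by blast
  have "path_wt n k lam \<alpha> \<beta> C = tab_wt n k \<alpha> \<beta> (f C)" if C: "C \<in> catalan_paths n k lam" for C \<alpha> \<beta>
  proof -
    have w: "path_west_on_L n k lam C = Wst k (n - k) lam C" by (rule west_eq[OF Y C])
    have s: "path_south_border k C = Rst k (n - k) (f C)" "Wst k (n - k) lam C = Ast k (n - k) (f C)"
      using fs C P by auto
    have "f_col n k (f C) = Ast k (n - k) (f C)" by (simp add: f_col_def Ast_def)
    moreover have "f_row n k (f C) = Rst k (n - k) (f C)" by (simp add: f_row_def Rst_def)
    ultimately show ?thesis using w s by (simp add: path_wt_def path_pwt_def tab_wt_def)
  qed
  then show ?thesis using fb P T by auto
qed


end
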